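(* Let $\mathcal{H}$ be a complex Hilbert space, let $A\in\mathcal{B}(\mathcal{H})$ be a nonzero positive operator, and let $\mathbb{A}=\begin{pmatrix}A&O\\O&A\end{pmatrix}$ on $\mathcal{H}\oplus\mathcal{H}$. Let $P,Q\in\mathcal{B}_A(\mathcal{H})$. Then $$\omega_{\mathbb{A}}\left[\begin{pmatrix}P&Q\\O&O\end{pmatrix}\right]\geq\frac12\max\{\omega_A(P+iQ),\omega_A(P-iQ)\}.$$
   Context: For a positive operator $A$ on $\mathcal{H}$, $\langle x,y\rangle_A:=\langle Ax,y\rangle$ and $\|x\|_A:=\sqrt{\langle x,x\rangle_A}$. $\mathcal{B}_A(\mathcal{H})$ is the set of $T\in\mathcal{B}(\mathcal{H})$ with $\mathcal{R}(T^*A)\subseteq\mathcal{R}(A)$. $\omega_A(T):=\sup\{|\langle Tx,x\rangle_A|:x\in\mathcal{H},\|x\|_A=1\}$. $\omega_{\mathbb{A}}$ is defined analogously on $\mathcal{H}\oplus\mathcal{H}$ with $\langle (x_1,x_2),(y_1,y_2)\rangle_{\mathbb{A}}=\langle x_1,y_1\rangle_A+\langle x_2,y_2\rangle_A$. *)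

theory Defs
  imports "HOL-Analysis.Analysis" "HOL-Library.Complex_Order"
begin

text \<open>Convention: cinner is linear in the first argument, conjugate linear in the second.
  A complex Hilbert space is a type of sort complex_inner_space + complete_space.\<close>

class complex_inner_space = real_normed_vector +
  fixes scaleC :: "complex \<Rightarrow> 'a \<Rightarrow> 'a"
    and cinner :: "'a \<Rightarrow> 'a \<Rightarrow> complex"
  assumes scaleC_add_right: "scaleC a (x + y) = scaleC a x + scaleC a y"
    and scaleC_add_left: "scaleC (a + b) x = scaleC a x + scaleC b x"
    and scaleC_scaleC: "scaleC a (scaleC b x) = scaleC (a * b) x"
    and scaleC_one: "scaleC 1 x = x"
    and scaleR_scaleC: "scaleR r x = scaleC (complex_of_real r) x"
    and cinner_commute: "cinner x y = cnj (cinner y x)"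
    and cinner_add_left: "cinner (x + y) z = cinner x z + cinner y z"
    and cinner_scaleC_left: "cinner (scaleC a x) y = a * cinner x y"
    and cinner_ge_zero: "0 \<le> cinner x x"
    and cinner_eq_zero_iff: "cinner x x = 0 \<longleftrightarrow> x = 0"
    and norm_eq_sqrt_cinner: "norm x = sqrt (Re (cinner x x))"

definition bounded_clinear_op :: "('a::complex_inner_space \<Rightarrow> 'a) \<Rightarrow> bool" where
  "bounded_clinear_op T \<longleftrightarrow>
     (\<forall>x y. T (x + y) = T x + T y) \<and> (\<forall>c x. T (scaleC c x) = scaleC c (T x)) \<and>
     (\<exists>K. \<forall>x. norm (T x) \<le> norm x * K)"

text \<open>Hilbert adjoint T* (exists uniquely for bounded operators on a Hilbert space).\<close>
definition adjoint_op :: "('a::complex_inner_space \<Rightarrow> 'a) \<Rightarrow> ('a \<Rightarrow> 'a)" where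
  "adjoint_op T = (SOME S. \<forall>x y. cinner (T x) y = cinner x (S y))"

definition positive_op :: "('a::complex_inner_space \<Rightarrow> 'a) \<Rightarrow> bool" where
  "positive_op A \<longleftrightarrow> bounded_clinear_op A \<and> (\<forall>x. 0 \<le> cinner (A x) x)"

definition A_inner :: "('a::complex_inner_space \<Rightarrow> 'a) \<Rightarrow> 'a \<Rightarrow> 'a \<Rightarrow> complex" where
  "A_inner A x y = cinner (A x) y"

definition A_norm :: "('a::complex_inner_space \<Rightarrow> 'a) \<Rightarrow> 'a \<Rightarrow> real" where
  "A_norm A x = sqrt (Re (A_inner A x x))"

definition B_A :: "('a::complex_inner_space \<Rightarrow> 'a) \<Rightarrow> ('a \<Rightarrow> 'a) set" where
  "B_A A = {T. bounded_clinear_op T \<and> range (adjoint_op T \<circ> A) \<subseteq> range A}"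

definition omega_A :: "('a::complex_inner_space \<Rightarrow> 'a) \<Rightarrow> ('a \<Rightarrow> 'a) \<Rightarrow> real" where
  "omega_A A T = Sup {cmod (A_inner A (T x) x) | x. A_norm A x = 1}"

text \<open>The operator diag(A,A) on H (+) H, realised as the product type 'a \<times> 'a.\<close>
definition AA_inner :: "('a::complex_inner_space \<Rightarrow> 'a) \<Rightarrow> 'a \<times> 'a \<Rightarrow> 'a \<times> 'a \<Rightarrow> complex" where
  "AA_inner A x y = A_inner A (fst x) (fst y) + A_inner A (snd x) (snd y)"

definition AA_norm :: "('a::complex_inner_space \<Rightarrow> 'a) \<Rightarrow> 'a \<times> 'a \<Rightarrow> real" where
  "AA_norm A x = sqrt (Re (AA_inner A x x))"

definition omega_AA :: "('a::complex_inner_space \<Rightarrow> 'a) \<Rightarrow> ('a \<times> 'a \<Rightarrow> 'a \<times> 'a) \<Rightarrow> real" where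
  "omega_AA A T = Sup {cmod (AA_inner A (T x) x) | x. AA_norm A x = 1}"

definition block_op :: "('a \<Rightarrow> 'a::complex_inner_space) \<Rightarrow> ('a \<Rightarrow> 'a) \<Rightarrow> ('a \<Rightarrow> 'a) \<Rightarrow> ('a \<Rightarrow> 'a)
    \<Rightarrow> ('a \<times> 'a \<Rightarrow> 'a \<times> 'a)" where
  "block_op T11 T12 T21 T22 = (\<lambda>(x1, x2). (T11 x1 + T12 x2, T21 x1 + T22 x2))"

end

theory Submission
  imports Defs
begin

lemma scaleC_zero_left [simp]: "scaleC 0 (x::'a::complex_inner_space) = 0"
  using scaleR_scaleC[of 0 x] by simp

lemma scaleC_zero_right [simp]: "scaleC a (0::'a::complex_inner_space) = 0"
  using scaleC_add_right[of a 0 0] by simp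

lemma scaleC_minus_left: "scaleC (-a) (x::'a::complex_inner_space) = - scaleC a x"
  using minus_unique[of "scaleC a x" "scaleC (-a) x"] scaleC_add_left[of a "-a" x] by simp

lemma scaleC_minus1 [simp]: "scaleC (-1) (x::'a::complex_inner_space) = - x"
  using scaleC_minus_left[of 1 x] by (simp add: scaleC_one)

lemma scaleC_minus_right: "scaleC a (- x::'a::complex_inner_space) = - scaleC a x"
  using minus_unique[of "scaleC a x" "scaleC a (-x)"] scaleC_add_right[of a x "-x"] by simp

lemma scaleC_diff_right: "scaleC a (x - y::'a::complex_inner_space) = scaleC a x - scaleC a y"
  using scaleC_add_right[of a x "-y"] by (simp add: scaleC_minus_right)

lemma cinner_zero_left [simp]: "cinner 0 (y::'a::complex_inner_space) = 0"
  using cinner_add_left[of 0 0 y] by simp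

lemma cinner_zero_right [simp]: "cinner (y::'a::complex_inner_space) 0 = 0"
  using cinner_commute[of y 0] by simp

lemma cinner_add_right: "cinner (x::'a::complex_inner_space) (y + z) = cinner x y + cinner x z"
  by (metis cinner_commute cinner_add_left complex_cnj_add)

lemma cinner_scaleC_right: "cinner (x::'a::complex_inner_space) (scaleC a y) = cnj a * cinner x y"
  by (metis cinner_commute cinner_scaleC_left complex_cnj_mult)

lemma cinner_minus_left: "cinner (- x::'a::complex_inner_space) y = - cinner x y"
  by (metis cinner_scaleC_left scaleC_minus1 mult_minus1)

lemma cinner_minus_right: "cinner (x::'a::complex_inner_space) (- y) = - cinner x y"
  by (metis cinner_commute cinner_minus_left complex_cnj_minus)

lemma cinner_diff_left: "cinner (x - y::'a::complex_inner_space) z = cinner x z - cinner y z"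
  using cinner_add_left[of x "-y" z] by (simp add: cinner_minus_left)

lemma cinner_diff_right: "cinner (x::'a::complex_inner_space) (y - z) = cinner x y - cinner x z"
  using cinner_add_right[of x y "-z"] by (simp add: cinner_minus_right)

lemma cinner_scaleR_left: "cinner (scaleR r x::'a::complex_inner_space) y = of_real r * cinner x y"
  by (simp add: scaleR_scaleC cinner_scaleC_left)

lemma cinner_scaleR_right: "cinner (x::'a::complex_inner_space) (scaleR r y) = of_real r * cinner x y"
  by (simp add: scaleR_scaleC cinner_scaleC_right)

lemma cinner_self_real: "cinner (x::'a::complex_inner_space) x = of_real (Re (cinner x x))"
  using cinner_ge_zero[of x] by (simp add: complex_eq_iff less_eq_complex_def)

lemma Re_cinner_self_ge0: "0 \<le> Re (cinner (x::'a::complex_inner_space) x)"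
  using cinner_ge_zero[of x] by (simp add: less_eq_complex_def)

lemma norm_sq_cinner: "(norm x)^2 = Re (cinner (x::'a::complex_inner_space) x)"
  by (simp add: norm_eq_sqrt_cinner Re_cinner_self_ge0)

lemma cinner_self_norm: "cinner (x::'a::complex_inner_space) x = of_real ((norm x)^2)"
  using cinner_self_real norm_sq_cinner by metis

lemma scaleC_scaleR_comm: "scaleC a (scaleR r (x::'a::complex_inner_space)) = scaleR r (scaleC a x)"
  by (simp add: scaleR_scaleC scaleC_scaleC mult.commute)


lemma form_CS:
  fixes B :: "'a::complex_inner_space \<Rightarrow> 'a \<Rightarrow> complex"
  assumes addl: "\<And>x y z. B (x + y) z = B x z + B y z"
    and scl: "\<And>a x y. B (scaleC a x) y = a * B x y"
    and herm: "\<And>x y. B x y = cnj (B y x)"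
    and pos: "\<And>x. Im (B x x) = 0 \<and> 0 \<le> Re (B x x)"
  shows "(cmod (B x y))^2 \<le> Re (B x x) * Re (B y y)"
proof -
  have addr: "B x (y + z) = B x y + B x z" for x y z
    by (simp only: herm[of x "y+z"] herm[of x y] herm[of x z] addl complex_cnj_add)
  have scr: "B x (scaleC a y) = cnj a * B x y" for a x y
    by (simp only: herm[of x "scaleC a y"] herm[of x y] scl complex_cnj_mult)
  define c where "c = B x y"
  have yx: "B y x = cnj c" using herm[of y x] c_def by simp
  have cc: "cnj c * c = of_real ((cmod c)^2)" "c * cnj c = of_real ((cmod c)^2)"
    using complex_norm_square[of c] by (simp_all add: mult.commute)
  have key: "0 \<le> Re (B x x) - 2 * t * (cmod c)^2 + t^2 * (cmod c)^2 * Re (B y y)" for t :: real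
  proof -
    define s where "s = - (complex_of_real t * c)"
    have "B (x + scaleC s y) (x + scaleC s y) = B x x + cnj s * c + s * (cnj c + cnj s * B y y)"
      unfolding addl addr scl scr c_def yx by (simp add: c_def algebra_simps)
    also have "cnj s * c = - of_real (t * (cmod c)^2)"
      by (simp add: s_def cc mult.assoc)
    also have "s * (cnj c + cnj s * B y y) = - of_real (t * (cmod c)^2) + of_real (t^2 * (cmod c)^2) * B y y"
    proof -
      have "s * (cnj c + cnj s * B y y) = - of_real t * (c * cnj c) + (of_real t)^2 * (c * cnj c) * B y y"
        by (simp add: s_def algebra_simps power2_eq_square)
      then show ?thesis by (simp add: cc)
    qed
    finally have "Re (B (x + scaleC s y) (x + scaleC s y)) = Re (B x x) - 2 * t * (cmod c)^2 + t^2 * (cmod c)^2 * Re (B y y)"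
      using pos[of y] by simp
    then show ?thesis using pos[of "x + scaleC s y"] by simp
  qed
  show ?thesis
  proof (cases "c = 0")
    case True then show ?thesis using pos[of x] pos[of y] by (simp add: c_def)
  next
    case False
    hence cpos: "(cmod c)^2 > 0" by simp
    show ?thesis
    proof (cases "Re (B y y) = 0")
      case True
      define t0 where "t0 = (Re (B x x) + 1) / (cmod c)^2"
      have k: "0 \<le> Re (B x x) - 2 * t0 * (cmod c)^2 + t0^2 * (cmod c)^2 * Re (B y y)"
        using key by blast
      have e: "t0 * (cmod c)^2 = Re (B x x) + 1"
        using cpos by (simp add: t0_def)
      have "0 \<le> Re (B x x)" using pos[of x] by blast
      then have False using k e True by simp
      then show ?thesis ..
    next
      case False
      hence ypos: "Re (B y y) > 0" using pos[of y] by linarith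
      have "0 \<le> Re (B x x) - 2 * (1 / Re (B y y)) * (cmod c)^2 + (1 / Re (B y y))^2 * (cmod c)^2 * Re (B y y)"
        using key[of "1 / Re (B y y)"] by simp
      then have "0 \<le> Re (B x x) - (cmod c)^2 / Re (B y y)"
        using ypos by (simp add: field_simps power2_eq_square)
      then show ?thesis using ypos by (simp add: c_def field_simps)
    qed
  qed
qed

lemma cinner_CS: "cmod (cinner x y) \<le> norm x * norm (y::'a::complex_inner_space)"
proof -
  have "(cmod (cinner x y))^2 \<le> Re (cinner x x) * Re (cinner y y)"
  proof (rule form_CS)
    show "cinner (x + y) z = cinner x z + cinner y z" for x y z :: 'a by (rule cinner_add_left)
    show "cinner (scaleC a x) y = a * cinner x y" for a and x y :: 'a by (rule cinner_scaleC_left)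
    show "cinner x y = cnj (cinner y x)" for x y :: 'a by (rule cinner_commute)
    show "Im (cinner x x) = 0 \<and> 0 \<le> Re (cinner x x)" for x :: 'a
      using cinner_self_real[of x] Re_cinner_self_ge0[of x] by (metis Im_complex_of_real)
  qed
  also have "\<dots> = (norm x * norm y)^2" by (simp add: norm_sq_cinner power_mult_distrib)
  finally show ?thesis by (simp add: power2_le_iff_abs_le)
qed

lemma parallelogram:
  "(norm (a + b))^2 + (norm (a - b))^2 = 2 * (norm a)^2 + 2 * (norm (b::'a::complex_inner_space))^2"
proof -
  have "cinner (a + b) (a + b) + cinner (a - b) (a - b) = 2 * cinner a a + 2 * cinner b b"
    by (simp add: cinner_add_left cinner_add_right cinner_diff_left cinner_diff_right)
  then have "Re (cinner (a + b) (a + b)) + Re (cinner (a - b) (a - b)) = 2 * Re (cinner a a) + 2 * Re (cinner b b)"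
    by (metis arg_cong[where f=Re] plus_complex.sel(1) mult_2)
  then show ?thesis by (simp add: norm_sq_cinner)
qed

lemma nearest_point:
  fixes N :: "'a::{complex_inner_space, complete_space} set"
  assumes cl: "closed N" and ne: "N \<noteq> {}"
    and mid: "\<And>a b. a \<in> N \<Longrightarrow> b \<in> N \<Longrightarrow> scaleR (1/2) (a + b) \<in> N"
  shows "\<exists>n0\<in>N. \<forall>n\<in>N. norm (z - n0) \<le> norm (z - n)"
proof -
  define D where "D = (\<lambda>n. norm (z - n)) ` N"
  define d where "d = Inf D"
  have bdd: "bdd_below D" unfolding D_def by (rule bdd_belowI[of _ 0]) auto
  have Dne: "D \<noteq> {}" using ne by (simp add: D_def)
  have dle: "d \<le> norm (z - n)" if "n \<in> N" for n
    unfolding d_def using bdd that by (auto simp: D_def intro!: cInf_lower)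
  have d0: "0 \<le> d" unfolding d_def using Dne by (auto simp: D_def intro!: cInf_greatest)
  have approx: "\<exists>n\<in>N. (norm (z - n))^2 < d^2 + 1 / Suc k" for k
  proof -
    have "d < sqrt (d^2 + 1 / Suc k)"
      by (rule real_less_rsqrt) simp
    then obtain e where "e \<in> D" "e < sqrt (d^2 + 1 / Suc k)"
      using cInf_less_iff[OF Dne bdd] d_def by auto
    then obtain n where n: "n \<in> N" "norm (z - n) < sqrt (d^2 + 1 / Suc k)" by (auto simp: D_def)
    then have "(norm (z - n))^2 < d^2 + 1 / Suc k"
    proof -
      have "(norm (z - n))^2 < (sqrt (d^2 + 1 / Suc k))^2"
        using n(2) by (rule power_strict_mono) auto
      then show ?thesis by simp
    qed
    then show ?thesis using n by blast
  qed
  then obtain f where f: "\<And>k. f k \<in> N" "\<And>k. (norm (z - f k))^2 < d^2 + 1 / Suc k"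
    by metis
  have fdist: "(norm (f j - f k))^2 \<le> 2 / Suc j + 2 / Suc k" for j k
  proof -
    have m: "scaleR (1/2) (f j + f k) \<in> N" using mid f(1) by blast
    have "z - f j + (z - f k) = scaleR 2 (z - scaleR (1/2) (f j + f k))"
      by (simp add: algebra_simps scaleR_2)
    then have "(norm (z - f j + (z - f k)))^2 = 4 * (norm (z - scaleR (1/2) (f j + f k)))^2"
      by (simp add: power_mult_distrib)
    moreover have "d^2 \<le> (norm (z - scaleR (1/2) (f j + f k)))^2"
      using dle[OF m] d0 by (simp add: power_mono)
    moreover have "(norm (z - f j - (z - f k)))^2 = (norm (f j - f k))^2"
      using norm_minus_commute[of "f k" "f j"] by simp
    moreover have "2 / real (Suc j) = 2 * (1 / real (Suc j))" "2 / real (Suc k) = 2 * (1 / real (Suc k))"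
      by simp_all
    ultimately show ?thesis
      using parallelogram[of "z - f j" "z - f k"] f(2)[of j] f(2)[of k] by linarith
  qed
  have "Cauchy f"
  proof (rule metric_CauchyI)
    fix e :: real assume "0 < e"
    obtain M :: nat where M: "4 / e^2 < M" using reals_Archimedean2 by blast
    have "4 / Suc M < e^2"
      using M \<open>0 < e\<close> by (simp add: field_simps) (smt (verit) zero_less_power)
    show "\<exists>M. \<forall>m\<ge>M. \<forall>n\<ge>M. dist (f m) (f n) < e"
    proof (intro exI allI impI)
      fix m n assume mn: "M \<le> m" "M \<le> n"
      have "2 / Suc m \<le> 2 / Suc M" "2 / Suc n \<le> 2 / Suc M"
        using mn by (simp_all add: frac_le)
      then have "(dist (f m) (f n))^2 < e^2"
        using fdist[of m n] \<open>4 / Suc M < e^2\<close> by (simp add: dist_norm)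
      then show "dist (f m) (f n) < e" using \<open>0 < e\<close>
        by (simp add: power_less_imp_less_base less_imp_le)
    qed
  qed
  then obtain n0 where lim: "f \<longlonglongrightarrow> n0" using Cauchy_convergent_iff convergent_def by blast
  have n0N: "n0 \<in> N" using closed_sequentially[OF cl f(1) lim] .
  have limn: "(\<lambda>k. (norm (z - f k))^2) \<longlonglongrightarrow> (norm (z - n0))^2"
    by (intro tendsto_intros lim)
  have limd: "(\<lambda>k. d^2 + 1 / real (Suc k)) \<longlonglongrightarrow> d^2"
    using tendsto_add[OF tendsto_const LIMSEQ_inverse_real_of_nat] by (simp add: inverse_eq_divide)
  have "(norm (z - n0))^2 \<le> d^2"
    by (rule LIMSEQ_le[OF limn limd]) (use f(2) less_imp_le in blast)
  then have "norm (z - n0) \<le> d" using d0 by (simp add: power2_le_iff_abs_le)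
  then show ?thesis using n0N dle by force
qed

lemma nearest_orth:
  fixes N :: "'a::complex_inner_space set"
  assumes sub: "\<And>a b c. a \<in> N \<Longrightarrow> b \<in> N \<Longrightarrow> a + scaleC c b \<in> N"
    and n0: "n0 \<in> N" and near: "\<forall>n\<in>N. norm (z - n0) \<le> norm (z - n)"
    and n: "n \<in> N"
  shows "cinner (z - n0) n = 0"
proof (rule ccontr)
  define v where "v = z - n0"
  define a where "a = cinner v n"
  assume "cinner (z - n0) n \<noteq> 0"
  hence a0: "a \<noteq> 0" by (simp add: a_def v_def)
  have cc: "cnj a * a = of_real ((cmod a)^2)" "a * cnj a = of_real ((cmod a)^2)"
    using complex_norm_square[of a] by (simp_all add: mult.commute)
  have key: "0 \<le> t^2 * (cmod a)^2 * (norm n)^2 - 2 * t * (cmod a)^2" for t :: real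
  proof -
    define s where "s = complex_of_real t * a"
    have "n0 + scaleC s n \<in> N" using sub n0 n by blast
    moreover have "z - (n0 + scaleC s n) = v - scaleC s n" by (simp add: v_def)
    ultimately have le: "norm v \<le> norm (v - scaleC s n)"
      using near v_def by metis
    have na: "cinner n v = cnj a" using cinner_commute[of n v] a_def by simp
    have "cinner (v - scaleC s n) (v - scaleC s n) = cinner v v - cnj s * a - s * cnj a + s * cnj s * cinner n n"
      by (simp add: cinner_diff_left cinner_diff_right cinner_scaleC_left cinner_scaleC_right a_def na algebra_simps)
    also have "cnj s * a = of_real (t * (cmod a)^2)" by (simp add: s_def mult.assoc cc)
    also have "s * cnj a = of_real (t * (cmod a)^2)" by (simp add: s_def mult.assoc cc)
    also have "s * cnj s = of_real (t^2 * (cmod a)^2)"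
    proof -
      have "s * cnj s = (of_real t)^2 * (a * cnj a)" by (simp add: s_def algebra_simps power2_eq_square)
      then show ?thesis by (simp add: cc)
    qed
    finally have E: "cinner (v - scaleC s n) (v - scaleC s n) = cinner v v - of_real (t * (cmod a)^2) - of_real (t * (cmod a)^2) + of_real (t^2 * (cmod a)^2) * cinner n n" .
    have "(norm (v - scaleC s n))^2 = (norm v)^2 - 2 * t * (cmod a)^2 + t^2 * (cmod a)^2 * (norm n)^2"
      using arg_cong[where f=Re, OF E] by (simp add: norm_sq_cinner)
    moreover have "(norm v)^2 \<le> (norm (v - scaleC s n))^2" using le by (simp add: power_mono)
    ultimately show ?thesis by linarith
  qed
  define t where "t = 1 / ((norm n)^2 + 1)"
  have "0 < (norm n)^2 + 1" by (metis add_pos_nonneg zero_less_one zero_le_power2 add.commute)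
  then have tpos: "t > 0" by (simp add: t_def)
  have apos: "(cmod a)^2 > 0" using a0 by simp
  have "0 \<le> t * (cmod a)^2 * (t * (norm n)^2 - 2)"
    using key[of t] by (simp add: algebra_simps power2_eq_square)
  moreover have "t * (norm n)^2 < 1"
    using \<open>0 < (norm n)^2 + 1\<close> by (simp add: t_def divide_less_eq)
  moreover have "t * (cmod a)^2 > 0" using tpos apos by simp
  ultimately show False by (simp add: zero_le_mult_iff)
qed

lemma riesz:
  fixes f :: "'a::{complex_inner_space, complete_space} \<Rightarrow> complex"
  assumes add: "\<And>x y. f (x + y) = f x + f y" and sc: "\<And>c x. f (scaleC c x) = c * f x"
    and bd: "\<And>x. cmod (f x) \<le> K * norm x"
  shows "\<exists>v. \<forall>x. f x = cinner x v"
proof (cases "\<forall>x. f x = 0")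
  case True then show ?thesis by (intro exI[of _ 0]) simp
next
  case False
  then obtain z0 where z0: "f z0 \<noteq> 0" by blast
  have f0: "f 0 = 0" using sc[of 0 0] by simp
  have fdiff: "f (x - y) = f x - f y" for x y
    using add[of "x - y" y] by simp
  have fR: "f (scaleR r x) = scaleR r (f x)" for r x
    by (simp add: scaleR_scaleC sc scaleR_conv_of_real)
  have bl: "bounded_linear f"
    by (rule bounded_linear_intro[OF add fR, of K]) (use bd in \<open>simp add: mult.commute\<close>)
  define N where "N = {x. f x = 0}"
  have cl: "closed N" unfolding N_def
    by (rule closed_Collect_eq) (auto intro: linear_continuous_on bl)
  have mid: "scaleR (1/2) (a + b) \<in> N" if "a \<in> N" "b \<in> N" for a b
    using that by (simp add: N_def fR add)
  obtain n0 where n0: "n0 \<in> N" "\<forall>n\<in>N. norm (z0 - n0) \<le> norm (z0 - n)"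
  proof -
    have "0 \<in> N" by (simp add: N_def f0)
    then have "N \<noteq> {}" by blast
    from nearest_point[OF cl this mid] show ?thesis using that by blast
  qed
  define v0 where "v0 = z0 - n0"
  have orth: "cinner v0 n = 0" if "n \<in> N" for n
    unfolding v0_def
    by (rule nearest_orth[OF _ n0 that]) (auto simp: N_def add sc)
  have fv0: "f v0 = f z0" using n0(1) by (simp add: v0_def fdiff N_def)
  have v0ne: "v0 \<noteq> 0" using fv0 z0 f0 by auto
  have vv: "cinner v0 v0 \<noteq> 0" using v0ne cinner_eq_zero_iff by blast
  have rep: "f x = f v0 / cinner v0 v0 * cinner x v0" for x
  proof -
    have "scaleC (f x) v0 - scaleC (f v0) x \<in> N"
      by (simp add: N_def fdiff sc)
    then have "cinner v0 (scaleC (f x) v0 - scaleC (f v0) x) = 0" using orth by blast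
    then have "cinner (scaleC (f x) v0 - scaleC (f v0) x) v0 = 0"
      using cinner_commute[of "scaleC (f x) v0 - scaleC (f v0) x" v0] by simp
    then have "f x * cinner v0 v0 = f v0 * cinner x v0"
      by (simp add: cinner_diff_left cinner_scaleC_left)
    then show ?thesis using vv by (simp add: field_simps)
  qed
  show ?thesis
  proof (intro exI[of _ "scaleC (cnj (f v0 / cinner v0 v0)) v0"] allI)
    fix x
    have "cinner x (scaleC (cnj (f v0 / cinner v0 v0)) v0) = f v0 / cinner v0 v0 * cinner x v0"
      by (simp only: cinner_scaleC_right complex_cnj_cnj)
    then show "f x = cinner x (scaleC (cnj (f v0 / cinner v0 v0)) v0)" using rep[of x] by simp
  qed
qed

lemma adjoint_exists:
  assumes "bounded_clinear_op (T::'a::{complex_inner_space, complete_space} \<Rightarrow> 'a)"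
  shows "\<forall>x y. cinner (T x) y = cinner x (adjoint_op T y)"
proof -
  from assms obtain K where add: "\<And>x y. T (x + y) = T x + T y"
    and sc: "\<And>c x. T (scaleC c x) = scaleC c (T x)" and K: "\<And>x. norm (T x) \<le> norm x * K"
    unfolding bounded_clinear_op_def by blast
  have "\<exists>v. \<forall>x. cinner (T x) y = cinner x v" for y
  proof (rule riesz)
    show "cinner (T (x + z)) y = cinner (T x) y + cinner (T z) y" for x z
      by (simp add: add cinner_add_left)
    show "cinner (T (scaleC c x)) y = c * cinner (T x) y" for c x
      by (simp add: sc cinner_scaleC_left)
    show "cmod (cinner (T x) y) \<le> (K * norm y) * norm x" for x
    proof -
      have "cmod (cinner (T x) y) \<le> norm (T x) * norm y" by (rule cinner_CS)
      also have "\<dots> \<le> norm x * K * norm y" using K[of x] by (simp add: mult_right_mono)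
      finally show ?thesis by (simp add: algebra_simps)
    qed
  qed
  then have "\<forall>y. \<exists>v. \<forall>x. cinner (T x) y = cinner x v" by blast
  then have "\<exists>S. \<forall>y. \<forall>x. cinner (T x) y = cinner x (S y)" by (rule choice)
  then have "\<exists>S. \<forall>x y. cinner (T x) y = cinner x (S y)" by blast
  then show ?thesis unfolding adjoint_op_def by (rule someI_ex)
qed

lemma bcl_add: "bounded_clinear_op T \<Longrightarrow> T (x + y) = T x + T y"
  unfolding bounded_clinear_op_def by blast
lemma bcl_sc: "bounded_clinear_op T \<Longrightarrow> T (scaleC c x) = scaleC c (T x)"
  unfolding bounded_clinear_op_def by blast
lemma bcl_0: "bounded_clinear_op T \<Longrightarrow> T 0 = 0"
  using bcl_sc[of T 0 0] by simp
lemma bcl_scR: "bounded_clinear_op T \<Longrightarrow> T (scaleR r x) = scaleR r (T x)"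
  by (simp add: scaleR_scaleC bcl_sc)
lemma bcl_minus: "bounded_clinear_op T \<Longrightarrow> T (- x) = - T x"
  using bcl_sc[of T "-1" x] by simp
lemma bcl_diff: "bounded_clinear_op T \<Longrightarrow> T (x - y) = T x - T y"
  using bcl_add[of T x "-y"] bcl_minus[of T y] by simp
lemma bcl_bound: "bounded_clinear_op T \<Longrightarrow> \<exists>K\<ge>0. \<forall>x. norm (T x) \<le> K * norm x"
proof -
  assume "bounded_clinear_op T"
  then obtain K where K: "\<And>x. norm (T x) \<le> norm x * K" unfolding bounded_clinear_op_def by blast
  have "norm (T x) \<le> \<bar>K\<bar> * norm x" for x
    using K[of x] by (metis abs_ge_self mult.commute mult_left_mono norm_ge_zero order_trans)
  then show ?thesis by (intro exI[of _ "\<bar>K\<bar>"]) auto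
qed

lemma adjoint_bound:
  assumes T: "bounded_clinear_op (T::'a::{complex_inner_space, complete_space} \<Rightarrow> 'a)"
  shows "\<exists>K\<ge>0. \<forall>y. norm (adjoint_op T y) \<le> K * norm y"
proof -
  obtain K where K0: "K \<ge> 0" and K: "\<And>x. norm (T x) \<le> K * norm x" using bcl_bound[OF T] by blast
  have adj: "\<And>x y. cinner (T x) y = cinner x (adjoint_op T y)" using adjoint_exists[OF T] by blast
  have "norm (adjoint_op T y) \<le> K * norm y" for y
  proof -
    let ?v = "adjoint_op T y"
    have "(norm ?v)^2 = Re (cinner (T ?v) y)" by (simp add: adj norm_sq_cinner)
    also have "\<dots> \<le> cmod (cinner (T ?v) y)" by (rule complex_Re_le_cmod)
    also have "\<dots> \<le> norm (T ?v) * norm y" by (rule cinner_CS)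
    also have "\<dots> \<le> K * norm ?v * norm y" using K[of ?v] by (simp add: mult_right_mono)
    finally have h: "norm ?v * norm ?v \<le> (K * norm y) * norm ?v" by (simp add: power2_eq_square algebra_simps)
    show ?thesis
    proof (cases "norm ?v = 0")
      case True then show ?thesis using K0 by simp
    next
      case False then show ?thesis using h by (simp add: mult_le_cancel_right)
    qed
  qed
  then show ?thesis using K0 by blast
qed

lemma pos_real: "positive_op A \<Longrightarrow> Im (cinner (A x) x) = 0 \<and> 0 \<le> Re (cinner (A x) x)"
  unfolding positive_op_def by (auto simp: less_eq_complex_def)

lemma pos_selfadj:
  assumes A: "positive_op (A::'a::complex_inner_space \<Rightarrow> 'a)"
  shows "cinner (A x) y = cinner x (A y)"
proof -
  have bA: "bounded_clinear_op A" using A unfolding positive_op_def by blast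
  define a where "a = cinner (A x) y"
  define b where "b = cinner (A y) x"
  have e1: "cinner (A (x + y)) (x + y) = cinner (A x) x + cinner (A y) y + a + b"
    by (simp add: bcl_add[OF bA] cinner_add_left cinner_add_right a_def b_def)
  have e2: "cinner (A (x + scaleC \<i> y)) (x + scaleC \<i> y) = cinner (A x) x + cinner (A y) y - \<i> * a + \<i> * b"
    by (simp add: bcl_add[OF bA] bcl_sc[OF bA] cinner_add_left cinner_add_right cinner_scaleC_left
        cinner_scaleC_right a_def b_def algebra_simps)
  have "Im a + Im b = 0"
    using arg_cong[where f=Im, OF e1] pos_real[OF A, of "x+y"] pos_real[OF A, of x] pos_real[OF A, of y]
    by simp
  moreover have "Re b - Re a = 0"
    using arg_cong[where f=Im, OF e2] pos_real[OF A, of "x + scaleC \<i> y"] pos_real[OF A, of x] pos_real[OF A, of y]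
    by simp
  ultimately have "a = cnj b" by (simp add: complex_eq_iff)
  moreover have "cinner x (A y) = cnj b" using cinner_commute[of x "A y"] b_def by simp
  ultimately show ?thesis using a_def by simp
qed

lemma A_norm_ge0: "positive_op A \<Longrightarrow> 0 \<le> A_norm A x"
  using pos_real[of A x] unfolding A_norm_def A_inner_def by simp

lemma A_CS:
  assumes A: "positive_op (A::'a::complex_inner_space \<Rightarrow> 'a)"
  shows "cmod (cinner (A x) y) \<le> A_norm A x * A_norm A y"
proof -
  have bA: "bounded_clinear_op A" using A unfolding positive_op_def by blast
  have "(cmod (cinner (A x) y))^2 \<le> Re (cinner (A x) x) * Re (cinner (A y) y)"
  proof (rule form_CS[where B="\<lambda>x y. cinner (A x) y"])
    show "cinner (A (x + y)) z = cinner (A x) z + cinner (A y) z" for x y z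
      by (simp add: bcl_add[OF bA] cinner_add_left)
    show "cinner (A (scaleC a x)) y = a * cinner (A x) y" for a and x y :: 'a
      by (simp add: bcl_sc[OF bA] cinner_scaleC_left)
    show "cinner (A x) y = cnj (cinner (A y) x)" for x y
      using pos_selfadj[OF A, of x y] cinner_commute[of x "A y"] by simp
    show "Im (cinner (A x) x) = 0 \<and> 0 \<le> Re (cinner (A x) x)" for x
      by (rule pos_real[OF A])
  qed
  also have "\<dots> = (A_norm A x * A_norm A y)^2"
    using pos_real[OF A, of x] pos_real[OF A, of y]
    by (simp add: A_norm_def A_inner_def power_mult_distrib)
  finally show ?thesis
    by (rule power2_le_imp_le) (simp add: A_norm_ge0[OF A])
qed

lemma A_norm_sq:
  assumes A: "positive_op A" shows "(A_norm A x)^2 = Re (cinner (A x) x)"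
  using pos_real[OF A, of x] unfolding A_norm_def A_inner_def by simp

lemma bl_cinner_left: "bounded_linear (\<lambda>y. cinner (y::'a::complex_inner_space) c)"
proof (rule bounded_linear_intro[of _ "norm c"])
  show "cinner (x + y) c = cinner x c + cinner y c" for x y :: 'a by (rule cinner_add_left)
  show "cinner (scaleR r x) c = scaleR r (cinner x c)" for r and x :: 'a
    by (simp add: cinner_scaleR_left scaleR_conv_of_real)
  show "norm (cinner x c) \<le> norm x * norm c" for x :: 'a by (simp only: norm_complex_def[symmetric] cinner_CS)
qed

lemma range_bound:
  fixes A T :: "'a::{complex_inner_space, complete_space} \<Rightarrow> 'a"
  assumes A: "positive_op A" and T: "T \<in> B_A A"
  shows "\<exists>M. \<forall>u. norm (A (T u)) \<le> M * norm (A u)"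
proof -
  have bA: "bounded_clinear_op A" using A unfolding positive_op_def by blast
  have bT: "bounded_clinear_op T" using T unfolding B_A_def by blast
  have adj: "\<And>x y. cinner (T x) y = cinner x (adjoint_op T y)" using adjoint_exists[OF bT] by blast
  have rng: "\<exists>w. adjoint_op T (A y) = A w" for y
  proof -
    have "(adjoint_op T \<circ> A) y \<in> range (adjoint_op T \<circ> A)" by (rule rangeI)
    then have "adjoint_op T (A y) \<in> range A" using T unfolding B_A_def by auto
    then show ?thesis by (auto simp: image_iff)
  qed
  have ident: "cinner y (A (T u)) = cinner w (A u)" if "adjoint_op T (A y) = A w" for y u w
  proof -
    have "cinner y (A (T u)) = cinner (A y) (T u)" using pos_selfadj[OF A, of y "T u"] by simp
    also have "\<dots> = cnj (cinner (T u) (A y))" by (rule cinner_commute)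
    also have "\<dots> = cnj (cinner u (A w))" by (simp add: adj that)
    also have "\<dots> = cinner (A w) u" using cinner_commute[of "A w" u] by simp
    also have "\<dots> = cinner w (A u)" by (rule pos_selfadj[OF A])
    finally show ?thesis .
  qed
  define G where "G n = {y. \<forall>u. norm (A u) \<le> 1 \<longrightarrow> cmod (cinner y (A (T u))) \<le> real n}" for n :: nat
  have clG: "closed (G n)" for n
  proof -
    have "G n = (\<Inter>u\<in>{u. norm (A u) \<le> 1}. {y. cmod (cinner y (A (T u))) \<le> real n})"
      by (auto simp: G_def)
    moreover have "closed {y. cmod (cinner y (A (T u))) \<le> real n}" for u
    proof (rule closed_Collect_le)
      show "continuous_on UNIV (\<lambda>y. cmod (cinner y (A (T u))))"
        by (rule continuous_on_norm, rule linear_continuous_on, rule bl_cinner_left)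
    qed (rule continuous_on_const)
    ultimately show ?thesis by auto
  qed
  have cover: "\<Union>(range G) = UNIV"
  proof (rule set_eqI, rule iffI)
    fix y :: 'a
    obtain w where w: "adjoint_op T (A y) = A w" using rng by blast
    obtain n :: nat where n: "norm w \<le> real n" using real_arch_simple by blast
    have "cmod (cinner y (A (T u))) \<le> real n" if "norm (A u) \<le> 1" for u
    proof -
      have "cmod (cinner y (A (T u))) = cmod (cinner w (A u))" by (simp add: ident[OF w])
      also have "\<dots> \<le> norm w * norm (A u)" by (rule cinner_CS)
      also have "\<dots> \<le> norm w" using that by (simp add: mult_left_le)
      finally show ?thesis using n by linarith
    qed
    then show "y \<in> \<Union>(range G)" by (auto simp: G_def)
  qed simp
  have "\<exists>n. interior (G n) \<noteq> {}"
  proof (rule ccontr)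
    assume "\<not> (\<exists>n. interior (G n) \<noteq> {})"
    then have nI: "interior (G m) = {}" for m by blast
    have "euclidean interior_of \<Union>(range G) = {}"
    proof (rule Baire_category_alt)
      show "completely_metrizable_space (euclidean::'a topology) \<or> locally_compact_space (euclidean::'a topology) \<and> regular_space (euclidean::'a topology)"
        using completely_metrizable_space_euclidean by blast
      show "countable (range G)" by simp
      fix S assume "S \<in> range G"
      then obtain m where m: "S = G m" by blast
      have "closedin euclidean S" using clG[of m] m closed_closedin by blast
      moreover have "euclidean interior_of S = {}" using nI[of m] m by simp
      ultimately show "closedin euclidean S \<and> euclidean interior_of S = {}" by blast
    qed
    then show False using cover by simp
  qed
  then obtain n y0 where "y0 \<in> interior (G n)" by blast
  then obtain r where r: "r > 0" "ball y0 r \<subseteq> G n" using mem_interior by blast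
  have small: "cmod (cinner z (A (T u))) \<le> 2 * real n" if "norm z < r" "norm (A u) \<le> 1" for z u
  proof -
    have "y0 \<in> G n" "y0 + z \<in> G n" using r that by (auto simp: dist_norm)
    then have "cmod (cinner y0 (A (T u))) \<le> real n" "cmod (cinner (y0 + z) (A (T u))) \<le> real n"
      using that(2) by (auto simp: G_def)
    moreover have "cmod (cinner z (A (T u))) = cmod (cinner (y0 + z) (A (T u)) - cinner y0 (A (T u)))"
      by (simp add: cinner_add_left)
    moreover have "cmod (cinner (y0 + z) (A (T u)) - cinner y0 (A (T u)))
        \<le> cmod (cinner (y0 + z) (A (T u))) + cmod (cinner y0 (A (T u)))" by (rule norm_triangle_ineq4)
    ultimately show ?thesis by linarith
  qed
  define M where "M = 4 * real n / r"
  have unit: "norm (A (T u)) \<le> M" if "norm (A u) \<le> 1" for u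
  proof (cases "A (T u) = 0")
    case True then show ?thesis using r by (simp add: M_def)
  next
    case False
    define c where "c = A (T u)"
    have cpos: "norm c > 0" using False c_def by simp
    define z where "z = scaleR (r / (2 * norm c)) c"
    have nz: "norm z = r / 2" using cpos r by (simp add: z_def)
    have "cinner z c = of_real (r / (2 * norm c)) * of_real ((norm c)^2)"
      by (simp add: z_def cinner_scaleR_left cinner_self_norm)
    then have "cmod (cinner z c) = \<bar>r / (2 * norm c) * (norm c)^2\<bar>"
      by (simp only: of_real_mult[symmetric] norm_of_real)
    also have "\<dots> = r / (2 * norm c) * (norm c)^2"
      using r cpos by (intro abs_of_nonneg) simp
    also have "\<dots> = r * norm c / 2" using cpos by (simp add: power2_eq_square)
    finally have "r * norm c / 2 \<le> 2 * real n"
      using small[of z u] nz r that by (simp add: c_def)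
    then show ?thesis using r by (simp add: M_def c_def field_simps)
  qed
  have "norm (A (T u)) \<le> M * norm (A u)" for u
  proof (cases "A u = 0")
    case True
    obtain w where w: "adjoint_op T (A (A (T u))) = A w" using rng by blast
    have "cinner (A (T u)) (A (T u)) = 0" using ident[OF w] True by simp
    then have "A (T u) = 0" using cinner_eq_zero_iff by blast
    then show ?thesis using True by simp
  next
    case False
    define s where "s = 1 / norm (A u)"
    have spos: "s > 0" using False by (simp add: s_def)
    have "norm (A (scaleR s u)) = 1" using False by (simp add: s_def bcl_scR[OF bA])
    then have "norm (A (T (scaleR s u))) \<le> M" using unit by simp
    then have "s * norm (A (T u)) \<le> M" using spos by (simp add: bcl_scR[OF bA] bcl_scR[OF bT])
    then show ?thesis using False by (simp add: s_def field_simps)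
  qed
  then show ?thesis by blast
qed

lemma pow_unbounded_contra:
  fixes q B :: real
  assumes q: "q > 1" and le: "\<And>n::nat. q ^ (2 ^ Suc n) \<le> B"
  shows False
proof -
  obtain n where n: "B < q ^ n" using real_arch_pow[OF q] by blast
  have "n < 2 ^ n" by (rule less_exp)
  moreover have "(2::nat) ^ n \<le> 2 ^ Suc n" by simp
  ultimately have "n \<le> 2 ^ Suc n" by linarith
  then have "q ^ n \<le> q ^ (2 ^ Suc n)" using q by (intro power_increasing) auto
  then show False using n le[of n] by linarith
qed

lemma A_bounded:
  fixes A T :: "'a::{complex_inner_space, complete_space} \<Rightarrow> 'a"
  assumes A: "positive_op A" and T: "T \<in> B_A A"
  shows "\<exists>C\<ge>0. \<forall>x. A_norm A (T x) \<le> C * A_norm A x"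
proof -
  have bA: "bounded_clinear_op A" using A unfolding positive_op_def by blast
  have bT: "bounded_clinear_op T" using T unfolding B_A_def by blast
  have adj: "\<And>x y. cinner (T x) y = cinner x (adjoint_op T y)" using adjoint_exists[OF bT] by blast
  obtain M where M: "\<And>u. norm (A (T u)) \<le> M * norm (A u)" using range_bound[OF A T] by blast
  obtain Ka where Ka0: "Ka \<ge> 0" and Ka: "\<And>y. norm (adjoint_op T y) \<le> Ka * norm y"
    using adjoint_bound[OF bT] by blast
  have rng: "\<exists>w. A w = adjoint_op T (A y)" for y
  proof -
    have "(adjoint_op T \<circ> A) y \<in> range (adjoint_op T \<circ> A)" by (rule rangeI)
    then have "adjoint_op T (A y) \<in> range A" using T unfolding B_A_def by auto
    then show ?thesis by (auto simp: image_iff)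
  qed
  then have "\<forall>y. \<exists>w. A w = adjoint_op T (A y)" by blast
  then have "\<exists>X. \<forall>y. A (X y) = adjoint_op T (A y)" by (rule choice)
  then obtain X where X: "\<And>y. A (X y) = adjoint_op T (A y)" by blast
  define S where "S u = X (T u)" for u
  define c where "c = Ka * \<bar>M\<bar> + 1"
  have cpos: "c > 0" using Ka0 by (simp add: c_def add_nonneg_pos)
  have S1: "norm (A (S u)) \<le> c * norm (A u)" for u
  proof -
    have "norm (A (S u)) = norm (adjoint_op T (A (T u)))" by (simp add: S_def X)
    also have "\<dots> \<le> Ka * norm (A (T u))" by (rule Ka)
    also have "\<dots> \<le> Ka * (\<bar>M\<bar> * norm (A u))"
    proof -
      have "M * norm (A u) \<le> \<bar>M\<bar> * norm (A u)" by (rule mult_right_mono) auto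
      then show ?thesis using M[of u] Ka0 by (intro mult_left_mono) auto
    qed
    also have "\<dots> \<le> c * norm (A u)" by (simp add: c_def algebra_simps)
    finally show ?thesis .
  qed
  have sa: "\<And>x y. cinner (A x) y = cinner x (A y)" using pos_selfadj[OF A] by blast
  have S2: "cinner (A (S u)) v = cinner (A u) (S v)" for u v
  proof -
    have "cinner (A (S u)) v = cinner (adjoint_op T (A (T u))) v" by (simp add: S_def X)
    also have "\<dots> = cnj (cinner v (adjoint_op T (A (T u))))" by (rule cinner_commute)
    also have "\<dots> = cnj (cinner (T v) (A (T u)))" by (simp add: adj)
    also have "\<dots> = cinner (A (T u)) (T v)" using cinner_commute[of "A (T u)" "T v"] by simp
    finally have l: "cinner (A (S u)) v = cinner (A (T u)) (T v)" .
    have "cinner (A u) (S v) = cinner u (A (X (T v)))" by (simp add: S_def sa)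
    also have "\<dots> = cinner u (adjoint_op T (A (T v)))" by (simp add: X)
    also have "\<dots> = cinner (T u) (A (T v))" by (simp add: adj)
    also have "\<dots> = cinner (A (T u)) (T v)" by (simp add: sa)
    finally show ?thesis using l by simp
  qed
  have S3: "cinner (A ((S ^^ i) u)) ((S ^^ j) v) = cinner (A ((S ^^ (i + j)) u)) v" for i j u v
  proof (induction j arbitrary: i)
    case 0 then show ?case by simp
  next
    case (Suc j)
    have "cinner (A ((S ^^ i) u)) ((S ^^ Suc j) v) = cinner (A ((S ^^ i) u)) (S ((S ^^ j) v))" by simp
    also have "\<dots> = cinner (A (S ((S ^^ i) u))) ((S ^^ j) v)" by (simp add: S2)
    also have "\<dots> = cinner (A ((S ^^ Suc i) u)) ((S ^^ j) v)" by simp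
    also have "\<dots> = cinner (A ((S ^^ (Suc i + j)) u)) v" by (rule Suc.IH)
    finally show ?case by simp
  qed
  have S4: "norm (A ((S ^^ k) u)) \<le> c ^ k * norm (A u)" for k u
  proof (induction k)
    case 0 then show ?case by simp
  next
    case (Suc k)
    have "norm (A ((S ^^ Suc k) u)) \<le> c * norm (A ((S ^^ k) u))" using S1 by simp
    also have "\<dots> \<le> c * (c ^ k * norm (A u))" using Suc.IH cpos by (simp add: mult_left_mono)
    finally show ?case by simp
  qed
  have key: "A_norm A (S x) \<le> c * A_norm A x" for x
  proof -
    define t where "t k = A_norm A ((S ^^ k) x)" for k
    define L where "L = norm (A x) * norm x"
    have t0: "t k \<ge> 0" for k by (simp add: t_def A_norm_ge0[OF A])
    have P1: "(t k)^2 \<le> t (2 * k) * t 0" for k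
    proof -
      have "(t k)^2 = Re (cinner (A ((S ^^ k) x)) ((S ^^ k) x))" by (simp add: t_def A_norm_sq[OF A])
      also have "\<dots> = Re (cinner (A ((S ^^ (2 * k)) x)) x)" by (simp add: S3 mult_2)
      also have "\<dots> \<le> cmod (cinner (A ((S ^^ (2 * k)) x)) x)" by (rule complex_Re_le_cmod)
      also have "\<dots> \<le> t (2 * k) * t 0" unfolding t_def using A_CS[OF A] by simp
      finally show ?thesis .
    qed
    have P1b: "(t k)^2 \<le> c ^ (2 * k) * L" for k
    proof -
      have "(t k)^2 = Re (cinner (A ((S ^^ k) x)) ((S ^^ k) x))" by (simp add: t_def A_norm_sq[OF A])
      also have "\<dots> = Re (cinner (A ((S ^^ (2 * k)) x)) x)" by (simp add: S3 mult_2)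
      also have "\<dots> \<le> cmod (cinner (A ((S ^^ (2 * k)) x)) x)" by (rule complex_Re_le_cmod)
      also have "\<dots> \<le> norm (A ((S ^^ (2 * k)) x)) * norm x" by (rule cinner_CS)
      also have "\<dots> \<le> c ^ (2 * k) * norm (A x) * norm x"
        using S4[of "2 * k" x] by (simp add: mult_right_mono)
      finally show ?thesis by (simp add: L_def mult.assoc)
    qed
    have P2: "t 1 ^ (2 ^ n) * t 0 \<le> t 0 ^ (2 ^ n) * t (2 ^ n)" for n
    proof (induction n)
      case 0 then show ?case by (simp add: mult.commute)
    next
      case (Suc n)
      show ?case
      proof (cases "t 0 = 0")
        case True then show ?thesis by (simp add: power_0_left)
      next
        case False
        hence tp: "t 0 > 0" using t0[of 0] by simp
        have "(t 1 ^ (2 ^ n) * t 0)^2 \<le> (t 0 ^ (2 ^ n) * t (2 ^ n))^2"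
          using Suc.IH t0 by (intro power_mono) auto
        moreover have "t k ^ (2 ^ Suc n) = (t k ^ (2^n))^2" for k
          by (simp add: power_mult[symmetric] mult.commute)
        ultimately have "t 1 ^ (2 ^ Suc n) * (t 0 * t 0) \<le> t 0 ^ (2 ^ Suc n) * (t (2 ^ n))^2"
          by (simp add: power_mult_distrib power2_eq_square mult_ac)
        also have "\<dots> \<le> t 0 ^ (2 ^ Suc n) * (t (2 ^ Suc n) * t 0)"
          using P1[of "2 ^ n"] t0 by (intro mult_left_mono) auto
        finally have "(t 1 ^ (2 ^ Suc n) * t 0) * t 0 \<le> (t 0 ^ (2 ^ Suc n) * t (2 ^ Suc n)) * t 0"
          by (simp add: algebra_simps)
        then show ?thesis using tp by (simp add: mult_le_cancel_right)
      qed
    qed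
    show ?thesis
    proof (cases "t 0 = 0")
      case True
      have "(t 1)^2 \<le> 0" using P1[of 1] True by simp
      then have "t 1 = 0" using t0[of 1] by simp
      then show ?thesis using True by (simp add: t_def)
    next
      case False
      hence tp: "t 0 > 0" using t0[of 0] by simp
      show ?thesis
      proof (rule ccontr)
        assume "\<not> ?thesis"
        then have gt: "t 1 > c * t 0" by (simp add: t_def)
        define q where "q = t 1 / (c * t 0)"
        have ctp: "c * t 0 > 0" using cpos tp by simp
        have q1: "q > 1" using gt ctp by (simp add: q_def)
        have "q ^ (2 ^ Suc n) \<le> L / (t 0)^2" for n
        proof -
          define N :: nat where "N = 2 ^ n"
          have "(t 1 ^ N * t 0)^2 \<le> (t 0 ^ N * t N)^2"
            using P2[of n] t0 by (intro power_mono) (auto simp: N_def)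
          also have "\<dots> = (t 0 ^ N)^2 * (t N)^2" by (simp add: power_mult_distrib)
          also have "\<dots> \<le> (t 0 ^ N)^2 * (c ^ (2 * N) * L)"
            using P1b[of N] by (intro mult_left_mono) auto
          finally have h: "t 1 ^ (2 * N) * (t 0)^2 \<le> t 0 ^ (2 * N) * c ^ (2 * N) * L"
            by (simp add: power_mult_distrib power_mult[symmetric] mult_ac)
          have eN: "(2::nat) ^ Suc n = 2 * N" by (simp add: N_def)
          have "q ^ (2 ^ Suc n) = t 1 ^ (2 * N) / ((c * t 0) ^ (2 * N))"
            by (simp only: q_def eN power_divide)
          also have "\<dots> \<le> L / (t 0)^2"
          proof -
            have D: "(c * t 0) ^ (2 * N) > 0" using ctp by (rule zero_less_power)
            have E: "(t 0)^2 > 0" using tp by (rule zero_less_power)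
            have "t 0 ^ (2 * N) * c ^ (2 * N) * L = L * (c * t 0) ^ (2 * N)"
              by (simp only: power_mult_distrib mult.commute mult.left_commute)
            then have "t 1 ^ (2 * N) * (t 0)^2 \<le> L * (c * t 0) ^ (2 * N)"
              using h by (rule ord_le_eq_trans[rotated])
            then have F1: "t 1 ^ (2 * N) \<le> L * (c * t 0) ^ (2 * N) / (t 0)^2"
              by (subst pos_le_divide_eq[OF E])
            have F2: "L * (c * t 0) ^ (2 * N) / (t 0)^2 = L / (t 0)^2 * (c * t 0) ^ (2 * N)"
              by (rule times_divide_eq_left[symmetric])
            have "t 1 ^ (2 * N) \<le> L / (t 0)^2 * (c * t 0) ^ (2 * N)"
              using F1 F2 by (rule ord_le_eq_trans)
            then show ?thesis by (subst pos_divide_le_eq[OF D])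
          qed
          finally show ?thesis .
        qed
        then show False using pow_unbounded_contra[OF q1] by blast
      qed
    qed
  qed
  have "A_norm A (T x) \<le> sqrt c * A_norm A x" for x
  proof -
    have eqS: "cinner (A (S x)) x = cinner (A (T x)) (T x)"
    proof -
      have "cinner (A (S x)) x = cinner (adjoint_op T (A (T x))) x" by (simp add: S_def X)
      also have "\<dots> = cnj (cinner x (adjoint_op T (A (T x))))" by (rule cinner_commute)
      also have "\<dots> = cnj (cinner (T x) (A (T x)))" by (simp add: adj)
      also have "\<dots> = cinner (A (T x)) (T x)" using cinner_commute[of "A (T x)" "T x"] by simp
      finally show ?thesis .
    qed
    have e1: "(A_norm A (T x))^2 = Re (cinner (A (T x)) (T x))" by (rule A_norm_sq[OF A])
    have "(A_norm A (T x))^2 = Re (cinner (A (S x)) x)" by (simp only: e1 eqS)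
    also have "\<dots> \<le> cmod (cinner (A (S x)) x)" by (rule complex_Re_le_cmod)
    also have "\<dots> \<le> A_norm A (S x) * A_norm A x" by (rule A_CS[OF A])
    also have "\<dots> \<le> c * A_norm A x * A_norm A x"
      using key[of x] A_norm_ge0[OF A, of x] by (intro mult_right_mono) auto
    also have "\<dots> = (sqrt c * A_norm A x)^2"
    proof -
      have sc: "(sqrt c)^2 = c" using cpos by simp
      have "(sqrt c * A_norm A x)^2 = (sqrt c)^2 * (A_norm A x)^2" by (rule power_mult_distrib)
      also have "\<dots> = c * (A_norm A x * A_norm A x)" by (simp only: sc power2_eq_square[of "A_norm A x"])
      finally show ?thesis by (simp only: mult.assoc)
    qed
    finally have "(A_norm A (T x))^2 \<le> (sqrt c * A_norm A x)^2" .
    then show ?thesis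
      by (rule power2_le_imp_le) (use A_norm_ge0[OF A, of x] cpos in simp)
  qed
  then show ?thesis using cpos by (intro exI[of _ "sqrt c"]) auto
qed

lemma A_inner_scaleR:
  "bounded_clinear_op A \<Longrightarrow> cinner (A (scaleR h u)) (scaleR h v) = of_real (h * h) * cinner (A u) v"
  by (simp add: bcl_scR cinner_scaleR_left cinner_scaleR_right)

lemma A_inner_scaleC:
  "bounded_clinear_op A \<Longrightarrow> cinner (A (scaleC s u)) (scaleC s v) = (s * cnj s) * cinner (A u) v"
  by (simp add: bcl_sc cinner_scaleC_left cinner_scaleC_right)

lemma exists_unit:
  fixes A :: "'a::{complex_inner_space, complete_space} \<Rightarrow> 'a"
  assumes A: "positive_op A" and nz: "A \<noteq> (\<lambda>x. 0)"
  shows "\<exists>x. A_norm A x = 1"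
proof -
  have bA: "bounded_clinear_op A" using A unfolding positive_op_def by blast
  obtain x where x: "A x \<noteq> 0" using nz by blast
  define r where "r = Re (cinner (A x) x)"
  have r0: "r \<ge> 0" using pos_real[OF A, of x] by (simp add: r_def)
  have "r \<noteq> 0"
  proof
    assume "r = 0"
    then have "A_norm A x = 0" by (simp add: A_norm_def A_inner_def r_def)
    then have "cmod (cinner (A x) (A x)) \<le> 0" using A_CS[OF A, of x "A x"] by simp
    then have "cinner (A x) (A x) = 0" by simp
    then show False using x cinner_eq_zero_iff by blast
  qed
  then have rp: "r > 0" using r0 by simp
  define s where "s = 1 / sqrt r"
  have "cinner (A (scaleR s x)) (scaleR s x) = of_real (s * s) * cinner (A x) x"
    by (rule A_inner_scaleR[OF bA])
  then have "Re (cinner (A (scaleR s x)) (scaleR s x)) = s * s * r" by (simp add: r_def)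
  also have "\<dots> = 1" using rp by (simp add: s_def)
  finally show ?thesis by (intro exI[of _ "scaleR s x"]) (simp add: A_norm_def A_inner_def)
qed

lemma block_value:
  fixes A P Q :: "'a::complex_inner_space \<Rightarrow> 'a"
  assumes bA: "bounded_clinear_op A"
  shows "AA_inner A (block_op P Q (\<lambda>x. 0) (\<lambda>x. 0) z) z = cinner (A (P (fst z) + Q (snd z))) (fst z)"
  by (cases z) (simp add: AA_inner_def block_op_def A_inner_def bcl_0[OF bA])

lemma AA_norm_sq:
  assumes A: "positive_op A"
  shows "(AA_norm A z)^2 = (A_norm A (fst z))^2 + (A_norm A (snd z))^2"
  using pos_real[OF A, of "fst z"] pos_real[OF A, of "snd z"]
  by (simp add: AA_norm_def AA_inner_def A_norm_sq[OF A] A_inner_def)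

lemma main_ineq:
  fixes A P Q :: "'a::{complex_inner_space, complete_space} \<Rightarrow> 'a"
  assumes A: "positive_op A" and nz: "A \<noteq> (\<lambda>x. 0)"
    and P: "P \<in> B_A A" and Q: "Q \<in> B_A A" and sg: "s * cnj s = 1"
  shows "omega_A A (\<lambda>x. P x + scaleC s (Q x)) \<le> 2 * omega_AA A (block_op P Q (\<lambda>x. 0) (\<lambda>x. 0))"
proof -
  have bA: "bounded_clinear_op A" using A unfolding positive_op_def by blast
  have bP: "bounded_clinear_op P" using P unfolding B_A_def by blast
  have bQ: "bounded_clinear_op Q" using Q unfolding B_A_def by blast
  obtain CP where CP0: "CP \<ge> 0" and CP: "\<And>x. A_norm A (P x) \<le> CP * A_norm A x"
    using A_bounded[OF A P] by blast
  obtain CQ where CQ0: "CQ \<ge> 0" and CQ: "\<And>x. A_norm A (Q x) \<le> CQ * A_norm A x"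
    using A_bounded[OF A Q] by blast
  define B where "B = block_op P Q (\<lambda>x::'a. 0::'a) (\<lambda>x. 0)"
  define SR where "SR = {cmod (AA_inner A (B z) z) | z. AA_norm A z = 1}"
  define SL where "SL = {cmod (A_inner A (P x + scaleC s (Q x)) x) | x. A_norm A x = 1}"
  have nn: "\<And>x. 0 \<le> A_norm A x" using A_norm_ge0[OF A] by blast
  have bdd: "bdd_above SR"
  proof (rule bdd_aboveI[of _ "CP + CQ"])
    fix e assume "e \<in> SR"
    then obtain z where z: "AA_norm A z = 1" "e = cmod (AA_inner A (B z) z)" by (auto simp: SR_def)
    obtain x1 x2 where zz: "z = (x1, x2)" by (cases z)
    have ss: "(A_norm A x1)^2 + (A_norm A x2)^2 = 1" using AA_norm_sq[OF A, of z] z zz by simp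
    have "(A_norm A x1)^2 \<le> 1" using ss zero_le_power2[of "A_norm A x2"] by linarith
    then have "(A_norm A x1)^2 \<le> 1^2" by simp
    then have a1: "A_norm A x1 \<le> 1" by (rule power2_le_imp_le) simp
    have "(A_norm A x2)^2 \<le> 1" using ss zero_le_power2[of "A_norm A x1"] by linarith
    then have "(A_norm A x2)^2 \<le> 1^2" by simp
    then have a2: "A_norm A x2 \<le> 1" by (rule power2_le_imp_le) simp
    have "e = cmod (cinner (A (P x1)) x1 + cinner (A (Q x2)) x1)"
      using z zz by (simp add: B_def block_value[OF bA] bcl_add[OF bA] cinner_add_left)
    also have "\<dots> \<le> cmod (cinner (A (P x1)) x1) + cmod (cinner (A (Q x2)) x1)" by (rule norm_triangle_ineq)
    also have "\<dots> \<le> A_norm A (P x1) * A_norm A x1 + A_norm A (Q x2) * A_norm A x1"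
      using A_CS[OF A] by (intro add_mono) auto
    also have "\<dots> \<le> CP * 1 * 1 + CQ * 1 * 1"
      using CP[of x1] mult_left_le[OF a1 CP0] mult_left_le[OF a2 CQ0] CQ[of x2] a1 a2 nn[of x1] nn[of x2] CP0 CQ0 nn[of "P x1"] nn[of "Q x2"]
      by (intro add_mono mult_mono) auto
    finally show "e \<le> CP + CQ" by simp
  qed
  obtain x0 where x0: "A_norm A x0 = 1" using exists_unit[OF A nz] by blast
  have SLne: "SL \<noteq> {}" using x0 by (auto simp: SL_def)
  define h :: real where "h = 1 / sqrt 2"
  have hh: "h * h = 1/2" by (simp add: h_def)
  have elem: "e \<le> 2 * Sup SR" if "e \<in> SL" for e
  proof -
    from that obtain x where x: "A_norm A x = 1" "e = cmod (A_inner A (P x + scaleC s (Q x)) x)"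
      by (auto simp: SL_def)
    define z where "z = (scaleR h x, scaleR h (scaleC s x))"
    have "(AA_norm A z)^2 = (A_norm A (scaleR h x))^2 + (A_norm A (scaleR h (scaleC s x)))^2"
      by (simp add: AA_norm_sq[OF A] z_def)
    also have "\<dots> = h * h * (A_norm A x)^2 + h * h * (A_norm A x)^2"
      by (simp add: A_norm_sq[OF A] A_inner_scaleR[OF bA] A_inner_scaleC[OF bA] sg)
    also have "\<dots> = 1" using x hh by simp
    finally have "(AA_norm A z)^2 = 1" .
    moreover have "AA_norm A z \<ge> 0"
      using pos_real[OF A, of "fst z"] pos_real[OF A, of "snd z"]
      by (simp add: AA_norm_def AA_inner_def A_inner_def)
    ultimately have zn: "AA_norm A z = 1" by (simp add: power2_eq_1_iff)
    have "P (scaleR h x) + Q (scaleR h (scaleC s x)) = scaleR h (P x + scaleC s (Q x))"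
      by (simp add: bcl_scR[OF bP] bcl_scR[OF bQ] bcl_sc[OF bQ] scaleR_add_right)
    then have "AA_inner A (B z) z = of_real (h * h) * A_inner A (P x + scaleC s (Q x)) x"
      by (simp add: B_def block_value[OF bA] z_def A_inner_scaleR[OF bA] A_inner_def)
    then have "cmod (AA_inner A (B z) z) = \<bar>h * h\<bar> * cmod (A_inner A (P x + scaleC s (Q x)) x)"
      by (simp only: norm_mult norm_of_real)
    then have "cmod (AA_inner A (B z) z) = e / 2" using x(2) hh by simp
    then have "e / 2 \<in> SR" using zn unfolding SR_def by (metis (mono_tags, lifting) mem_Collect_eq)
    then have "e / 2 \<le> Sup SR" using bdd by (rule cSup_upper)
    then show ?thesis by simp
  qed
  have "Sup SL \<le> 2 * Sup SR" using SLne elem by (rule cSup_least)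
  then show ?thesis by (simp add: omega_A_def omega_AA_def SL_def SR_def B_def)
qed

theorem theorem2p19:
  fixes A P Q :: "'a::{complex_inner_space, complete_space} \<Rightarrow> 'a"
  assumes "positive_op A" and "A \<noteq> (\<lambda>x. 0)"
    and "P \<in> B_A A" and "Q \<in> B_A A"
  shows "omega_AA A (block_op P Q (\<lambda>x. 0) (\<lambda>x. 0)) \<ge>
    (1/2) * max (omega_A A (\<lambda>x. P x + scaleC \<i> (Q x))) (omega_A A (\<lambda>x. P x - scaleC \<i> (Q x)))"
proof -
  have e: "(\<lambda>x. P x - scaleC \<i> (Q x)) = (\<lambda>x. P x + scaleC (- \<i>) (Q x))"
    by (simp add: scaleC_minus_left)
  have 1: "omega_A A (\<lambda>x. P x + scaleC \<i> (Q x)) \<le> 2 * omega_AA A (block_op P Q (\<lambda>x. 0) (\<lambda>x. 0))"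
    by (rule main_ineq[OF assms]) simp
  have 2: "omega_A A (\<lambda>x. P x - scaleC \<i> (Q x)) \<le> 2 * omega_AA A (block_op P Q (\<lambda>x. 0) (\<lambda>x. 0))"
    unfolding e by (rule main_ineq[OF assms]) simp
  show ?thesis using 1 2 by simp
qed

end
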